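(* Let $N\ge1$, $V=\{1,\dots,N\}$, $A$ an $N\times N$ row-stochastic matrix, and $\sigma_1,\sigma_2,\dots$ random variables with values in $V$. Consider $x(k+1)=A_{\sigma_k}x(k)$, $k\ge1$, with deterministic $x(1)\in\mathbb R^N$. Suppose: (a) $\mathcal G(A)$ is rooted. (b) There exists $\alpha>0$ such that whenever $\mathbb P(\sigma_k\mid\sigma_{k-1},\dots,\sigma_1)\neq0$, it is $\ge\alpha$. (c) For every $k\ge1$ there is $\mathscr I_k\subseteq V$ such that $\{\sigma:\mathbb P(\sigma_k=\sigma\mid\sigma_{k-1},\dots,\sigma_1)\neq0\}=\mathscr I_k$ for all past values $(\sigma_{k-1},\dots,\sigma_1)\in V^{k-1}$. (d) There exists $q>0$ with $\bigcup_{\tau=k}^{k+q-1}\mathscr I_\tau=V$ for all $k\ge1$. (e) There exists a nonempty $\chi\subseteq\mathbbm r(A)$ (a strongly connected component of $\mathbbm r(A)$, i.e. the subgraph of $\mathcal G(A)$ induced by $\chi$ is strongly connected) with $\chi\subseteq\mathscr I_k$ for all $k\ge1$. Then the iteration reaches consensus almost surely.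
   Context: $\mathcal G(A)$ is the directed graph on $V$ with an edge $(j,i)$ iff $a_{ij}>0$; it is rooted if some node $r$ has a directed path to every other node, and $\mathbbm r(A)$ is the set of such roots. For $\sigma\in V$, $A_\sigma$ is the identity matrix with its $\sigma$-th row replaced by the $\sigma$-th row of $A$. For $k=1$ conditional probabilities given the empty past are unconditional. The iteration reaches consensus almost surely if for every $\varepsilon>0$ and every $x(1)$, $\lim_{k\to\infty}\mathbb P\big(\sum_{j=1}^N (x_j(k)-\frac1N\sum_{i=1}^N x_i(k))^2\ge\varepsilon\big)=0$. *)

theory Defs
  imports "HOL-Probability.Probability"
begin

text \<open>Node set V = {1..N}; matrices are functions nat => nat => real, vectors nat => real,
  only entries indexed by V matter.\<close>

definition row_stochastic :: "nat \<Rightarrow> (nat \<Rightarrow> nat \<Rightarrow> real) \<Rightarrow> bool" where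
  "row_stochastic N A \<longleftrightarrow>
     (\<forall>i\<in>{1..N}. \<forall>j\<in>{1..N}. A i j \<ge> 0) \<and> (\<forall>i\<in>{1..N}. (\<Sum>j\<in>{1..N}. A i j) = 1)"

definition gedge :: "nat \<Rightarrow> (nat \<Rightarrow> nat \<Rightarrow> real) \<Rightarrow> nat \<Rightarrow> nat \<Rightarrow> bool" where
  "gedge N A j i \<longleftrightarrow> j \<in> {1..N} \<and> i \<in> {1..N} \<and> A i j > 0"

definition roots :: "nat \<Rightarrow> (nat \<Rightarrow> nat \<Rightarrow> real) \<Rightarrow> nat set" where
  "roots N A = {r\<in>{1..N}. \<forall>v\<in>{1..N}. (gedge N A)\<^sup>*\<^sup>* r v}"

definition rooted :: "nat \<Rightarrow> (nat \<Rightarrow> nat \<Rightarrow> real) \<Rightarrow> bool" where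
  "rooted N A \<longleftrightarrow> roots N A \<noteq> {}"

definition induced_strongly_connected :: "nat \<Rightarrow> (nat \<Rightarrow> nat \<Rightarrow> real) \<Rightarrow> nat set \<Rightarrow> bool" where
  "induced_strongly_connected N A C \<longleftrightarrow>
     (\<forall>u\<in>C. \<forall>v\<in>C. (\<lambda>a b. gedge N A a b \<and> a \<in> C \<and> b \<in> C)\<^sup>*\<^sup>* u v)"

definition sel_mat :: "(nat \<Rightarrow> nat \<Rightarrow> real) \<Rightarrow> nat \<Rightarrow> nat \<Rightarrow> nat \<Rightarrow> real" where
  "sel_mat A s i j = (if i = s then A i j else if i = j then 1 else 0)"

definition mat_vec :: "nat \<Rightarrow> (nat \<Rightarrow> nat \<Rightarrow> real) \<Rightarrow> (nat \<Rightarrow> real) \<Rightarrow> nat \<Rightarrow> real" where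
  "mat_vec N B x i = (\<Sum>j\<in>{1..N}. B i j * x j)"

text \<open>x(1) = x1, x(k+1) = A_{sigma_k} x(k); index 0 unused (set to x1).\<close>
fun traj :: "nat \<Rightarrow> (nat \<Rightarrow> nat \<Rightarrow> real) \<Rightarrow> (nat \<Rightarrow> 'a \<Rightarrow> nat) \<Rightarrow> (nat \<Rightarrow> real)
              \<Rightarrow> nat \<Rightarrow> 'a \<Rightarrow> nat \<Rightarrow> real" where
  "traj N A \<sigma> x1 0 \<omega> = x1"
| "traj N A \<sigma> x1 (Suc k) \<omega> =
     (if k = 0 then x1 else mat_vec N (sel_mat A (\<sigma> k \<omega>)) (traj N A \<sigma> x1 k \<omega>))"

definition past_event :: "'a measure \<Rightarrow> (nat \<Rightarrow> 'a \<Rightarrow> nat) \<Rightarrow> nat \<Rightarrow> (nat \<Rightarrow> nat) \<Rightarrow> 'a set" where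
  "past_event M \<sigma> k v = {\<omega>\<in>space M. \<forall>i\<in>{1..<k}. \<sigma> i \<omega> = v i}"

definition cond_prob :: "'a measure \<Rightarrow> (nat \<Rightarrow> 'a \<Rightarrow> nat) \<Rightarrow> nat \<Rightarrow> nat \<Rightarrow> (nat \<Rightarrow> nat) \<Rightarrow> real" where
  "cond_prob M \<sigma> k s v =
     measure M {\<omega>\<in>past_event M \<sigma> k v. \<sigma> k \<omega> = s} / measure M (past_event M \<sigma> k v)"

definition disagreement :: "nat \<Rightarrow> (nat \<Rightarrow> real) \<Rightarrow> real" where
  "disagreement N x = (\<Sum>j\<in>{1..N}. (x j - (\<Sum>i\<in>{1..N}. x i) / real N)\<^sup>2)"

end

theory Submission
  imports Defs
begin


definition stepT :: "nat \<Rightarrow> (nat \<Rightarrow> nat \<Rightarrow> real) \<Rightarrow> nat \<Rightarrow> (nat \<Rightarrow> real) \<Rightarrow> nat \<Rightarrow> real" where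
  "stepT N A s y = mat_vec N (sel_mat A s) y"

fun run :: "nat \<Rightarrow> (nat \<Rightarrow> nat \<Rightarrow> real) \<Rightarrow> nat \<Rightarrow> nat \<Rightarrow> (nat \<Rightarrow> nat) \<Rightarrow> (nat \<Rightarrow> real) \<Rightarrow> nat \<Rightarrow> real" where
  "run N A t 0 s x = x"
| "run N A t (Suc n) s x = stepT N A (s (t+n)) (run N A t n s x)"

definition spread :: "nat \<Rightarrow> (nat \<Rightarrow> real) \<Rightarrow> real" where
  "spread N y = Max (y ` {1..N}) - Min (y ` {1..N})"

lemma stepT_eq:
  assumes "i \<in> {1..N}"
  shows "stepT N A s y i = (if i = s then (\<Sum>j\<in>{1..N}. A s j * y j) else y i)"
proof (cases "i = s")
  case True thus ?thesis by (simp add: stepT_def mat_vec_def sel_mat_def)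
next
  case False
  have "stepT N A s y i = (\<Sum>j\<in>{1..N}. (if i = j then y j else 0))"
    unfolding stepT_def mat_vec_def sel_mat_def using False by (intro sum.cong) auto
  also have "\<dots> = y i" using assms by (simp add: sum.delta)
  finally show ?thesis using False by simp
qed

lemma stepT_neg: "stepT N A s (\<lambda>i. - y i) = (\<lambda>i. - stepT N A s y i)"
  by (rule ext) (simp add: stepT_def mat_vec_def sum_negf[symmetric])

lemma run_neg: "run N A t n s (\<lambda>i. - x i) = (\<lambda>i. - run N A t n s x i)"
  by (induction n) (simp_all add: stepT_neg)

lemma run_add: "run N A t (n + m) s x = run N A (t + n) m s (run N A t n s x)"
  by (induction m) (simp_all add: add.assoc)

lemma run_cong: "(\<And>\<tau>. t \<le> \<tau> \<Longrightarrow> \<tau> < t + n \<Longrightarrow> s \<tau> = s' \<tau>) \<Longrightarrow> run N A t n s x = run N A t n s' x"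
  by (induction n) auto

lemma spread_le:
  assumes "N \<ge> 1" "\<And>i. i \<in> {1..N} \<Longrightarrow> lo \<le> y i \<and> y i \<le> hi"
  shows "spread N y \<le> hi - lo"
proof -
  have ne: "y ` {1..N} \<noteq> {}" using assms(1) by auto
  have "Max (y ` {1..N}) \<le> hi" using ne assms(2) by (subst Max_le_iff) auto
  moreover have "lo \<le> Min (y ` {1..N})" using ne assms(2) by (subst Min_ge_iff) auto
  ultimately show ?thesis unfolding spread_def by simp
qed

lemma spread_bounds:
  fixes N :: nat
  assumes "i \<in> {1..N}"
  shows "Min (y ` {1..N}) \<le> y i" "y i \<le> Max (y ` {1..N})"
  using assms by (auto intro!: Min_le Max_ge finite_imageI finite_atLeastAtMost)

lemma disagreement_le:
  assumes "N \<ge> 1"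
  shows "disagreement N x \<le> real N * (spread N x)\<^sup>2"
proof -
  let ?m = "Min (x ` {1..N})" and ?M = "Max (x ` {1..N})"
  have b: "\<And>i. i \<in> {1..N} \<Longrightarrow> ?m \<le> x i \<and> x i \<le> ?M" by auto
  have "(\<Sum>i\<in>{1..N}. ?m) \<le> (\<Sum>i\<in>{1..N}. x i)" by (rule sum_mono) (use b in auto)
  hence lo: "?m \<le> (\<Sum>i\<in>{1..N}. x i) / real N" using assms by (simp add: field_simps)
  have "(\<Sum>i\<in>{1..N}. x i) \<le> (\<Sum>i\<in>{1..N}. ?M)" by (rule sum_mono) (use b in auto)
  hence hi: "(\<Sum>i\<in>{1..N}. x i) / real N \<le> ?M" using assms by (simp add: field_simps)
  have "disagreement N x \<le> (\<Sum>j\<in>{1..N}. (spread N x)\<^sup>2)"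
    unfolding disagreement_def
  proof (rule sum_mono)
    fix j assume j: "j \<in> {1..N}"
    have "\<bar>x j - (\<Sum>i\<in>{1..N}. x i) / real N\<bar> \<le> spread N x"
      using b[OF j] lo hi unfolding spread_def by linarith
    thus "(x j - (\<Sum>i\<in>{1..N}. x i) / real N)\<^sup>2 \<le> (spread N x)\<^sup>2"
      by (metis abs_ge_zero power2_abs power_mono)
  qed
  thus ?thesis by simp
qed

locale detset =
  fixes N :: nat and A :: "nat \<Rightarrow> nat \<Rightarrow> real" and I :: "nat \<Rightarrow> nat set"
    and q :: nat and r :: nat and \<rho> :: nat and a :: real
  assumes N1: "N \<ge> 1"
    and nonneg: "\<And>i j. i \<in> {1..N} \<Longrightarrow> j \<in> {1..N} \<Longrightarrow> A i j \<ge> 0"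
    and rows: "\<And>i. i \<in> {1..N} \<Longrightarrow> (\<Sum>j\<in>{1..N}. A i j) = 1"
    and qpos: "q > 0"
    and dcond: "\<And>k. k \<ge> 1 \<Longrightarrow> (\<Union>\<tau>\<in>{k..k+q-1}. I \<tau>) = {1..N}"
    and rV: "r \<in> {1..N}" and rI: "\<And>k. k \<ge> 1 \<Longrightarrow> r \<in> I k"
    and \<rho>V: "\<rho> \<in> {1..N}" and Ar\<rho>: "A r \<rho> > 0"
    and \<rho>reach: "\<And>v. v \<in> {1..N} \<Longrightarrow> (gedge N A)\<^sup>*\<^sup>* \<rho> v"
    and apos: "a > 0" and a1: "a \<le> 1"
    and amin: "\<And>i j. i \<in> {1..N} \<Longrightarrow> j \<in> {1..N} \<Longrightarrow> A i j > 0 \<Longrightarrow> a \<le> A i j"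
begin

definition inv :: "real \<Rightarrow> nat set \<Rightarrow> real \<Rightarrow> real \<Rightarrow> (nat \<Rightarrow> real) \<Rightarrow> bool" where
  "inv m S c z y \<longleftrightarrow> (\<forall>i\<in>{1..N}. m \<le> y i) \<and> (\<forall>i\<in>S. m + c * (z - m) \<le> y i)"

lemma lower_step:
  assumes "\<And>i. i \<in> {1..N} \<Longrightarrow> m \<le> y i" "s \<in> {1..N}" "i \<in> {1..N}"
  shows "m \<le> stepT N A s y i"
proof (cases "i = s")
  case True
  have "(\<Sum>j\<in>{1..N}. A s j * m) \<le> (\<Sum>j\<in>{1..N}. A s j * y j)"
    by (rule sum_mono) (use assms nonneg in \<open>auto intro: mult_left_mono\<close>)
  moreover have "(\<Sum>j\<in>{1..N}. A s j * m) = m" using rows[OF assms(2)] by (simp add: sum_distrib_right[symmetric])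
  ultimately show ?thesis using True assms(3) by (simp add: stepT_eq)
next
  case False thus ?thesis using assms by (simp add: stepT_eq)
qed

lemma spread_step:
  assumes "s \<in> {1..N}"
  shows "spread N (stepT N A s y) \<le> spread N y"
proof -
  define m where "m = Min (y ` {1..N})"
  define M where "M = Max (y ` {1..N})"
  have l: "\<And>i. i \<in> {1..N} \<Longrightarrow> m \<le> stepT N A s y i"
    by (rule lower_step) (use assms in \<open>auto simp: m_def\<close>)
  have u0: "\<And>i. i \<in> {1..N} \<Longrightarrow> - M \<le> stepT N A s (\<lambda>i. - y i) i"
    by (rule lower_step) (use assms in \<open>auto simp: M_def\<close>)
  have u: "\<And>i. i \<in> {1..N} \<Longrightarrow> stepT N A s y i \<le> M"
    using u0 by (simp add: stepT_neg)
  have "spread N (stepT N A s y) \<le> M - m" using spread_le[OF N1, where y="stepT N A s y" and lo=m and hi=M] l u by auto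
  thus ?thesis unfolding spread_def m_def M_def .
qed

lemma inv_mono: "inv m S c z y \<Longrightarrow> S' \<subseteq> S \<Longrightarrow> inv m S' c z y"
  unfolding inv_def by auto

lemma inv_step:
  assumes inv: "inv m S c z y" and s: "s \<in> {1..N}" and j: "j \<in> S" "j \<in> {1..N}" and Asj: "A s j > 0"
    and c: "c \<ge> 0" and z: "m \<le> z" and SV: "S \<subseteq> {1..N}"
  shows "inv m (insert s S) (a * c) z (stepT N A s y)"
proof -
  have yi: "\<And>i. i \<in> {1..N} \<Longrightarrow> m \<le> y i" using inv unfolding inv_def by blast
  have yS: "\<And>i. i \<in> S \<Longrightarrow> m + c * (z - m) \<le> y i" using inv unfolding inv_def by blast
  have czm: "0 \<le> c * (z - m)" using c z by simp
  have acz: "a * c * (z - m) \<le> c * (z - m)"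
    using mult_left_le_one_le[OF czm _ a1] apos by (simp add: mult.assoc)
  have part1: "\<forall>i\<in>{1..N}. m \<le> stepT N A s y i"
    using lower_step[of m y s] yi s by blast
  have part2: "m + a * c * (z - m) \<le> stepT N A s y i" if i: "i \<in> insert s S" for i
  proof (cases "i = s")
    case True
    have nn: "\<And>k. k \<in> {1..N} \<Longrightarrow> 0 \<le> A s k * (y k - m)"
      using nonneg[OF s] yi by simp
    have "A s j * (y j - m) \<le> (\<Sum>k\<in>{1..N}. A s k * (y k - m))"
      by (rule member_le_sum) (use j nn in auto)
    moreover have "(\<Sum>k\<in>{1..N}. A s k * (y k - m)) = (\<Sum>k\<in>{1..N}. A s k * y k) - m"
      using rows[OF s] by (simp add: right_diff_distrib sum_subtractf sum_distrib_right[symmetric])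
    moreover have "a * (c * (z - m)) \<le> A s j * (y j - m)"
    proof (rule mult_mono)
      show "a \<le> A s j" using amin[OF s j(2) Asj] .
      show "c * (z - m) \<le> y j - m" using yS[OF j(1)] by simp
    qed (use Asj czm in auto)
    moreover have "stepT N A s y i = (\<Sum>k\<in>{1..N}. A s k * y k)"
      using stepT_eq[OF s, of A s y] True by simp
    ultimately show ?thesis by (simp add: mult.assoc)
  next
    case False
    hence iS: "i \<in> S" using i by blast
    hence iV: "i \<in> {1..N}" using SV by blast
    have "stepT N A s y i = y i" using stepT_eq[OF iV, of A s y] False by simp
    thus ?thesis using yS[OF iS] acz by simp
  qed
  show ?thesis unfolding inv_def using part1 part2 by blast
qed

lemma boundary:
  assumes SV: "S \<subseteq> {1..N}" and \<rho>S: "\<rho> \<in> S" and ne: "S \<noteq> {1..N}"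
  shows "\<exists>u\<in>S. \<exists>v\<in>{1..N}. v \<notin> S \<and> A v u > 0"
proof -
  obtain v where v: "v \<in> {1..N}" "v \<notin> S" using SV ne by blast
  have "(gedge N A)\<^sup>*\<^sup>* \<rho> v" using \<rho>reach[OF v(1)] .
  from this v(2) show ?thesis
  proof (induction rule: rtranclp_induct)
    case base thus ?case using \<rho>S by simp
  next
    case (step y z)
    show ?case
    proof (cases "y \<in> S")
      case True thus ?thesis using step unfolding gedge_def by blast
    next
      case False thus ?thesis using step.IH by blast
    qed
  qed
qed

lemma stage:
  assumes SV: "S \<subseteq> {1..N}" and \<rho>S: "\<rho> \<in> S" and t: "t \<ge> 1"
  shows "\<exists>s S'. S \<subseteq> S' \<and> S' \<subseteq> {1..N} \<and> min N (card S + 1) \<le> card S'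
     \<and> (\<forall>\<tau>. t \<le> \<tau> \<and> \<tau> < t + q \<longrightarrow> s \<tau> \<in> I \<tau>)
     \<and> (\<forall>m c z y. inv m S c z y \<and> 0 \<le> c \<and> m \<le> z \<longrightarrow> inv m S' (a ^ q * c) z (run N A t q s y))"
proof (cases "S = {1..N}")
  case True
  let ?s = "\<lambda>_::nat. r"
  have "inv m S (a ^ n * c) z (run N A t n ?s y)" if "inv m S c z y" "0 \<le> c" "m \<le> z" for m c z y n
  proof (induction n)
    case 0 thus ?case using that by simp
  next
    case (Suc n)
    have "inv m (insert r S) (a * (a ^ n * c)) z (run N A t (Suc n) ?s y)"
      using inv_step[OF Suc rV \<rho>S \<rho>V Ar\<rho> _ that(3) SV] apos that(2) by simp
    hence "inv m S (a * (a ^ n * c)) z (run N A t (Suc n) ?s y)" by (rule inv_mono) auto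
    thus ?case by (simp add: mult.assoc)
  qed
  note gen = this
  have sI: "\<forall>\<tau>. t \<le> \<tau> \<and> \<tau> < t + q \<longrightarrow> ?s \<tau> \<in> I \<tau>"
  proof (intro allI impI)
    fix \<tau> assume "t \<le> \<tau> \<and> \<tau> < t + q"
    hence "1 \<le> \<tau>" using t by linarith
    thus "?s \<tau> \<in> I \<tau>" using rI by blast
  qed
  have cS: "card S = N" unfolding True by simp
  have "S \<subseteq> S \<and> S \<subseteq> {1..N} \<and> min N (card S + 1) \<le> card S
     \<and> (\<forall>\<tau>. t \<le> \<tau> \<and> \<tau> < t + q \<longrightarrow> ?s \<tau> \<in> I \<tau>)
     \<and> (\<forall>m c z y. inv m S c z y \<and> 0 \<le> c \<and> m \<le> z \<longrightarrow> inv m S (a ^ q * c) z (run N A t q ?s y))"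
  proof (intro conjI)
    show "min N (card S + 1) \<le> card S" unfolding cS by (rule min.cobounded1)
    show "\<forall>m c z y. inv m S c z y \<and> 0 \<le> c \<and> m \<le> z \<longrightarrow> inv m S (a ^ q * c) z (run N A t q ?s y)"
    proof (intro allI impI)
      fix m c z y assume H: "inv m S c z y \<and> 0 \<le> c \<and> m \<le> z"
      show "inv m S (a ^ q * c) z (run N A t q ?s y)"
        by (rule gen) (use H in \<open>simp_all\<close>)
    qed
    show "S \<subseteq> S" by (rule subset_refl)
    show "S \<subseteq> {1..N}" by (rule SV)
    show "\<forall>\<tau>. t \<le> \<tau> \<and> \<tau> < t + q \<longrightarrow> ?s \<tau> \<in> I \<tau>" by (rule sI)
  qed
  thus ?thesis by (intro exI[of _ ?s] exI[of _ S])
next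
  case False
  obtain u v where u: "u \<in> S" and v: "v \<in> {1..N}" "v \<notin> S" and Avu: "A v u > 0"
    using boundary[OF SV \<rho>S False] by blast
  have "v \<in> (\<Union>\<tau>\<in>{t..t+q-1}. I \<tau>)" using dcond[OF t] v by simp
  then obtain \<tau>0 where \<tau>0: "t \<le> \<tau>0" "\<tau>0 < t + q" "v \<in> I \<tau>0" using qpos by auto
  let ?s = "\<lambda>\<tau>. if \<tau> = \<tau>0 then v else r"
  have uV: "u \<in> {1..N}" using u SV by auto
  have "n \<le> q \<Longrightarrow> inv m (if \<tau>0 < t + n then insert v S else S) (a ^ n * c) z (run N A t n ?s y)"
    if "inv m S c z y" "0 \<le> c" "m \<le> z" for m c z y n
  proof (induction n)
    case 0 thus ?case using that \<tau>0 by simp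
  next
    case (Suc n)
    let ?C = "if \<tau>0 < t + n then insert v S else S"
    have IH: "inv m ?C (a ^ n * c) z (run N A t n ?s y)" using Suc by simp
    have CV: "?C \<subseteq> {1..N}" using SV v by auto
    have acn: "0 \<le> a ^ n * c" using apos that(2) by simp
    show ?case
    proof (cases "t + n = \<tau>0")
      case True
      hence C: "?C = S" by simp
      have "inv m (insert v ?C) (a * (a ^ n * c)) z (stepT N A v (run N A t n ?s y))"
        by (rule inv_step[OF IH v(1) _ uV Avu acn that(3) CV]) (use u C in simp)
      thus ?thesis using True C by (simp add: mult.assoc)
    next
      case False
      have "inv m (insert r ?C) (a * (a ^ n * c)) z (stepT N A r (run N A t n ?s y))"
        by (rule inv_step[OF IH rV _ \<rho>V Ar\<rho> acn that(3) CV]) (use \<rho>S in simp)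
      hence "inv m ?C (a * (a ^ n * c)) z (stepT N A r (run N A t n ?s y))"
        using inv_mono by blast
      moreover have "(if \<tau>0 < t + Suc n then insert v S else S) = ?C" using False \<tau>0 by auto
      ultimately show ?thesis using False by (simp add: mult.assoc)
    qed
  qed
  note gen = this
  have main: "inv m (insert v S) (a ^ q * c) z (run N A t q ?s y)"
    if "inv m S c z y" "0 \<le> c" "m \<le> z" for m c z y using gen[of m c z y q] that \<tau>0 by simp
  have fin: "finite S" using SV finite_subset by blast
  have "card (insert v S) = card S + 1" using fin v by simp
  have sI: "\<forall>\<tau>. t \<le> \<tau> \<and> \<tau> < t + q \<longrightarrow> ?s \<tau> \<in> I \<tau>" using \<tau>0 rI t by auto
  have "S \<subseteq> insert v S \<and> insert v S \<subseteq> {1..N} \<and> min N (card S + 1) \<le> card (insert v S)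
     \<and> (\<forall>\<tau>. t \<le> \<tau> \<and> \<tau> < t + q \<longrightarrow> ?s \<tau> \<in> I \<tau>)
     \<and> (\<forall>m c z y. inv m S c z y \<and> 0 \<le> c \<and> m \<le> z \<longrightarrow> inv m (insert v S) (a ^ q * c) z (run N A t q ?s y))"
  proof (intro conjI)
    show "min N (card S + 1) \<le> card (insert v S)" using \<open>card (insert v S) = card S + 1\<close> by simp
    show "\<forall>m c z y. inv m S c z y \<and> 0 \<le> c \<and> m \<le> z \<longrightarrow> inv m (insert v S) (a ^ q * c) z (run N A t q ?s y)"
      using main by blast
  qed (use SV v sI in auto)
  thus ?thesis by (intro exI[of _ ?s] exI[of _ "insert v S"])
qed

lemma stages:
  assumes t: "t \<ge> 1"
  shows "\<exists>s S. \<rho> \<in> S \<and> S \<subseteq> {1..N} \<and> min N (n + 1) \<le> card S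
     \<and> (\<forall>\<tau>. t \<le> \<tau> \<and> \<tau> < t + n * q \<longrightarrow> s \<tau> \<in> I \<tau>)
     \<and> (\<forall>m c z y. inv m {\<rho>} c z y \<and> 0 \<le> c \<and> m \<le> z \<longrightarrow> inv m S (a ^ (n * q) * c) z (run N A t (n * q) s y))"
proof (induction n)
  case 0
  have "\<rho> \<in> {\<rho>} \<and> {\<rho>} \<subseteq> {1..N} \<and> min N (0 + 1) \<le> card {\<rho>}
     \<and> (\<forall>\<tau>. t \<le> \<tau> \<and> \<tau> < t + 0 * q \<longrightarrow> (\<lambda>_::nat. r) \<tau> \<in> I \<tau>)
     \<and> (\<forall>m c z y. inv m {\<rho>} c z y \<and> 0 \<le> c \<and> m \<le> z \<longrightarrow> inv m {\<rho>} (a ^ (0 * q) * c) z (run N A t (0 * q) (\<lambda>_::nat. r) y))"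
    using \<rho>V by auto
  thus ?case by (intro exI[of _ "\<lambda>_::nat. r"] exI[of _ "{\<rho>}"])
next
  case (Suc n)
  then obtain s S where \<rho>S: "\<rho> \<in> S" and SV: "S \<subseteq> {1..N}" and cS: "min N (n + 1) \<le> card S"
    and sI: "\<forall>\<tau>. t \<le> \<tau> \<and> \<tau> < t + n * q \<longrightarrow> s \<tau> \<in> I \<tau>"
    and sinv: "\<forall>m c z y. inv m {\<rho>} c z y \<and> 0 \<le> c \<and> m \<le> z \<longrightarrow> inv m S (a ^ (n * q) * c) z (run N A t (n * q) s y)"
    by blast
  have t': "t + n * q \<ge> 1" using t by simp
  obtain s2 S' where SS': "S \<subseteq> S'" and S'V: "S' \<subseteq> {1..N}" and cS': "min N (card S + 1) \<le> card S'"
    and s2I: "\<forall>\<tau>. t + n * q \<le> \<tau> \<and> \<tau> < t + n * q + q \<longrightarrow> s2 \<tau> \<in> I \<tau>"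
    and s2inv: "\<forall>m c z y. inv m S c z y \<and> 0 \<le> c \<and> m \<le> z \<longrightarrow> inv m S' (a ^ q * c) z (run N A (t + n * q) q s2 y)"
    using stage[OF SV \<rho>S t'] by blast
  define s' where "s' = (\<lambda>\<tau>. if \<tau> < t + n * q then s \<tau> else s2 \<tau>)"
  have eq: "Suc n * q = n * q + q" by simp
  have run_eq: "run N A t (Suc n * q) s' y = run N A (t + n * q) q s2 (run N A t (n * q) s y)" for y
  proof -
    have "run N A t (Suc n * q) s' y = run N A (t + n * q) q s' (run N A t (n * q) s' y)"
      unfolding eq by (rule run_add)
    also have "run N A t (n * q) s' y = run N A t (n * q) s y"
      by (rule run_cong) (simp add: s'_def)
    also have "run N A (t + n * q) q s' (run N A t (n * q) s y) = run N A (t + n * q) q s2 (run N A t (n * q) s y)"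
      by (rule run_cong) (simp add: s'_def)
    finally show ?thesis .
  qed
  have P1: "\<rho> \<in> S'" using \<rho>S SS' by blast
  have P2: "min N (Suc n + 1) \<le> card S'" using cS cS' by linarith
  have P3: "\<forall>\<tau>. t \<le> \<tau> \<and> \<tau> < t + Suc n * q \<longrightarrow> s' \<tau> \<in> I \<tau>"
  proof (intro allI impI)
    fix \<tau> assume h: "t \<le> \<tau> \<and> \<tau> < t + Suc n * q"
    show "s' \<tau> \<in> I \<tau>"
    proof (cases "\<tau> < t + n * q")
      case True thus ?thesis using sI h by (simp add: s'_def)
    next
      case False thus ?thesis using s2I h by (simp add: s'_def)
    qed
  qed
  have P4: "\<forall>m c z y. inv m {\<rho>} c z y \<and> 0 \<le> c \<and> m \<le> z \<longrightarrow> inv m S' (a ^ (Suc n * q) * c) z (run N A t (Suc n * q) s' y)"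
  proof (intro allI impI)
    fix m c z y assume H: "inv m {\<rho>} c z y \<and> 0 \<le> c \<and> m \<le> z"
    have i1: "inv m S (a ^ (n * q) * c) z (run N A t (n * q) s y)" using sinv H by blast
    have "0 \<le> a ^ (n * q) * c" using apos H by simp
    hence "inv m S' (a ^ q * (a ^ (n * q) * c)) z (run N A (t + n * q) q s2 (run N A t (n * q) s y))"
      using s2inv i1 H by blast
    moreover have "a ^ q * (a ^ (n * q) * c) = a ^ (Suc n * q) * c"
      by (simp add: power_add mult.assoc)
    ultimately show "inv m S' (a ^ (Suc n * q) * c) z (run N A t (Suc n * q) s' y)"
      using run_eq by simp
  qed
  have "\<rho> \<in> S' \<and> S' \<subseteq> {1..N} \<and> min N (Suc n + 1) \<le> card S'
     \<and> (\<forall>\<tau>. t \<le> \<tau> \<and> \<tau> < t + Suc n * q \<longrightarrow> s' \<tau> \<in> I \<tau>)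
     \<and> (\<forall>m c z y. inv m {\<rho>} c z y \<and> 0 \<le> c \<and> m \<le> z \<longrightarrow> inv m S' (a ^ (Suc n * q) * c) z (run N A t (Suc n * q) s' y))"
    using P1 S'V P2 P3 P4 by (intro conjI)
  thus ?case by (intro exI[of _ s'] exI[of _ S'])
qed

lemma window:
  assumes t: "t \<ge> 1"
  shows "\<exists>s. (\<forall>\<tau>. t \<le> \<tau> \<and> \<tau> < t + N * q \<longrightarrow> s \<tau> \<in> I \<tau>)
     \<and> (\<forall>x. spread N (run N A t (N * q) s x) \<le> (1 - a ^ (N * q)) * spread N x)"
proof -
  obtain s S where \<rho>S: "\<rho> \<in> S" and SV: "S \<subseteq> {1..N}" and cS: "min N (N + 1) \<le> card S"
    and sI: "\<forall>\<tau>. t \<le> \<tau> \<and> \<tau> < t + N * q \<longrightarrow> s \<tau> \<in> I \<tau>"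
    and sinv: "\<forall>m c z y. inv m {\<rho>} c z y \<and> 0 \<le> c \<and> m \<le> z \<longrightarrow> inv m S (a ^ (N * q) * c) z (run N A t (N * q) s y)"
    using stages[OF t, of N] by blast
  have "card S \<ge> N" using cS by simp
  hence SVeq: "S = {1..N}" using SV by (metis card_atLeastAtMost card_seteq diff_Suc_1 finite_atLeastAtMost)
  let ?c = "a ^ (N * q)"
  have c0: "0 \<le> ?c" using apos by simp
  have "spread N (run N A t (N * q) s x) \<le> (1 - ?c) * spread N x" for x
  proof -
    define m where "m = Min (x ` {1..N})"
    define M where "M = Max (x ` {1..N})"
    let ?z = "x \<rho>"
    have xb: "\<And>i. i \<in> {1..N} \<Longrightarrow> m \<le> x i \<and> x i \<le> M"
      unfolding m_def M_def using spread_bounds by blast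
    have mz: "m \<le> ?z" and zM: "?z \<le> M" using xb[OF \<rho>V] by auto
    have i1: "inv m {\<rho>} 1 ?z x" unfolding inv_def using xb by auto
    have i2: "inv (- M) {\<rho>} 1 (- ?z) (\<lambda>i. - x i)" unfolding inv_def using xb by auto
    have r1: "inv m S (?c * 1) ?z (run N A t (N * q) s x)" using sinv[rule_format, of m 1 ?z x] i1 mz by simp
    have r2: "inv (- M) S (?c * 1) (- ?z) (run N A t (N * q) s (\<lambda>i. - x i))" using sinv[rule_format, of "- M" 1 "- ?z" "\<lambda>i. - x i"] i2 zM by simp
    have lo: "m + ?c * (?z - m) \<le> run N A t (N * q) s x i" if "i \<in> {1..N}" for i
      using r1 that unfolding inv_def SVeq by simp
    have hi: "run N A t (N * q) s x i \<le> M - ?c * (M - ?z)" if "i \<in> {1..N}" for i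
    proof -
      have "- M + ?c * 1 * (- ?z - - M) \<le> run N A t (N * q) s (\<lambda>i. - x i) i"
        using r2 that unfolding inv_def SVeq by blast
      thus ?thesis unfolding run_neg by (simp add: algebra_simps)
    qed
    have "spread N (run N A t (N * q) s x) \<le> (M - ?c * (M - ?z)) - (m + ?c * (?z - m))"
      by (rule spread_le[OF N1]) (use lo hi in blast)
    also have "\<dots> = (1 - ?c) * (M - m)" by (simp add: algebra_simps)
    also have "M - m = spread N x" unfolding spread_def m_def M_def ..
    finally show ?thesis .
  qed
  thus ?thesis using sI by blast
qed

end


locale probset = prob_space M for M :: "'a measure" +
  fixes N :: nat and \<sigma> :: "nat \<Rightarrow> 'a \<Rightarrow> nat" and I :: "nat \<Rightarrow> nat set" and \<alpha> :: real
  assumes meas: "\<And>k. k \<ge> 1 \<Longrightarrow> \<sigma> k \<in> measurable M (count_space UNIV)"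
    and vals: "\<And>k \<omega>. k \<ge> 1 \<Longrightarrow> \<omega> \<in> space M \<Longrightarrow> \<sigma> k \<omega> \<in> {1..N}"
    and \<alpha>0: "\<alpha> > 0"
    and bcond: "\<And>k v s. k \<ge> 1 \<Longrightarrow> measure M (past_event M \<sigma> k v) > 0 \<Longrightarrow> cond_prob M \<sigma> k s v \<noteq> 0
                 \<Longrightarrow> \<alpha> \<le> cond_prob M \<sigma> k s v"
    and ccond: "\<And>k v. k \<ge> 1 \<Longrightarrow> (\<forall>i\<in>{1..<k}. v i \<in> {1..N}) \<Longrightarrow> measure M (past_event M \<sigma> k v) > 0
                 \<Longrightarrow> {s\<in>{1..N}. cond_prob M \<sigma> k s v \<noteq> 0} = I k"
begin

definition path :: "nat \<Rightarrow> 'a \<Rightarrow> nat \<Rightarrow> nat" where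
  "path t \<omega> = restrict (\<lambda>i. \<sigma> i \<omega>) {1..<t}"

definition R :: "nat \<Rightarrow> (nat \<Rightarrow> nat) set" where
  "R t = PiE {1..<t} (\<lambda>_. {1..N})"

definition pd :: "nat \<Rightarrow> 'a set \<Rightarrow> bool" where
  "pd t E \<longleftrightarrow> (\<exists>P. E = {\<omega>\<in>space M. P (path t \<omega>)})"

lemma finite_R: "finite (R t)"
  unfolding R_def by (intro finite_PiE) auto

lemma path_R: "\<omega> \<in> space M \<Longrightarrow> path t \<omega> \<in> R t"
  unfolding path_def R_def using vals by (auto simp: restrict_PiE_iff)

lemma sig_sets: "i \<ge> 1 \<Longrightarrow> {\<omega>\<in>space M. \<sigma> i \<omega> = c} \<in> sets M"
proof -
  assume i: "i \<ge> 1"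
  have "\<sigma> i -` {c} \<inter> space M \<in> sets M" by (rule measurable_sets[OF meas[OF i]]) simp
  moreover have "\<sigma> i -` {c} \<inter> space M = {\<omega>\<in>space M. \<sigma> i \<omega> = c}" by auto
  ultimately show ?thesis by simp
qed

lemma past_sets: "past_event M \<sigma> t v \<in> sets M"
  unfolding past_event_def
proof (rule sets.sets_Collect_finite_All)
  fix i assume "i \<in> {1..<t}"
  hence "i \<ge> 1" by simp
  thus "{\<omega> \<in> space M. \<sigma> i \<omega> = v i} \<in> sets M" by (rule sig_sets)
qed simp

lemma atom_eq:
  assumes v: "v \<in> R t"
  shows "{\<omega>\<in>space M. path t \<omega> = v} = past_event M \<sigma> t v"
proof -
  have "path t \<omega> = v \<longleftrightarrow> (\<forall>i\<in>{1..<t}. \<sigma> i \<omega> = v i)" for \<omega>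
  proof
    assume h: "path t \<omega> = v"
    show "\<forall>i\<in>{1..<t}. \<sigma> i \<omega> = v i"
    proof
      fix i assume i: "i \<in> {1..<t}"
      have "path t \<omega> i = v i" using h by simp
      thus "\<sigma> i \<omega> = v i" using i unfolding path_def restrict_apply by simp
    qed
  next
    assume h: "\<forall>i\<in>{1..<t}. \<sigma> i \<omega> = v i"
    show "path t \<omega> = v"
    proof
      fix i show "path t \<omega> i = v i"
      proof (cases "i \<in> {1..<t}")
        case True thus ?thesis using h unfolding path_def restrict_apply by simp
      next
        case False
        have "v i = undefined" using v False unfolding R_def by (rule PiE_arb)
        moreover have "path t \<omega> i = undefined" unfolding path_def using False by (simp only: restrict_def if_False)
        ultimately show ?thesis by simp
      qed
    qed
  qed
  thus ?thesis unfolding past_event_def by blast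
qed

lemma atom_sets: "{\<omega>\<in>space M. path t \<omega> = v} \<in> sets M"
proof (cases "v \<in> R t")
  case True thus ?thesis using atom_eq past_sets by simp
next
  case False
  have e: "{\<omega>\<in>space M. path t \<omega> = v} = {}" using False path_R by blast
  show ?thesis unfolding e by (rule sets.empty_sets)
qed

lemma decomp:
  assumes F: "\<And>v. v \<in> B \<Longrightarrow> F v \<subseteq> {\<omega>\<in>space M. path t \<omega> = v} \<and> F v \<in> sets M" and B: "B \<subseteq> R t"
  shows "measure M (\<Union>v\<in>B. F v) = (\<Sum>v\<in>B. measure M (F v))"
proof (rule finite_measure_finite_Union)
  show "finite B" using B finite_R finite_subset by blast
  show "F ` B \<subseteq> sets M" using F by blast
  show "disjoint_family_on F B"
    unfolding disjoint_family_on_def using F by blast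
qed

lemma pd_union:
  assumes "pd t E"
  shows "\<exists>P. E = (\<Union>v\<in>{v\<in>R t. P v}. {\<omega>\<in>space M. path t \<omega> = v}) \<and> E = {\<omega>\<in>space M. P (path t \<omega>)}"
proof -
  obtain P where E: "E = {\<omega>\<in>space M. P (path t \<omega>)}" using assms unfolding pd_def by blast
  have "E = (\<Union>v\<in>{v\<in>R t. P v}. {\<omega>\<in>space M. path t \<omega> = v})" unfolding E using path_R by auto
  thus ?thesis using E by blast
qed

lemma pd_sets: "pd t E \<Longrightarrow> E \<in> sets M"
proof -
  assume "pd t E"
  then obtain P where E: "E = (\<Union>v\<in>{v\<in>R t. P v}. {\<omega>\<in>space M. path t \<omega> = v})"
    using pd_union by blast
  have "finite {v\<in>R t. P v}" using finite_R by simp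
  thus ?thesis unfolding E using atom_sets by (intro sets.finite_UN) auto
qed

lemma pd_space: "pd t (space M)"
  unfolding pd_def by (rule exI[of _ "\<lambda>_. True"]) simp

lemma pd_Int: "pd t E \<Longrightarrow> pd t F \<Longrightarrow> pd t (E \<inter> F)"
  unfolding pd_def by (elim exE, rule_tac x="\<lambda>w. P w \<and> Pa w" in exI) auto

lemma pd_Diff: "pd t E \<Longrightarrow> pd t F \<Longrightarrow> pd t (E - F)"
  unfolding pd_def by (elim exE, rule_tac x="\<lambda>w. P w \<and> \<not> Pa w" in exI) auto

lemma path_restrict: "t \<le> t' \<Longrightarrow> restrict (path t' \<omega>) {1..<t} = path t \<omega>"
  unfolding path_def by (auto simp: restrict_def)

lemma pd_mono: "pd t E \<Longrightarrow> t \<le> t' \<Longrightarrow> pd t' E"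
  unfolding pd_def
proof (elim exE)
  fix P assume E: "E = {\<omega> \<in> space M. P (path t \<omega>)}" and tt: "t \<le> t'"
  show "\<exists>P. E = {\<omega> \<in> space M. P (path t' \<omega>)}"
    by (rule exI[of _ "\<lambda>w. P (restrict w {1..<t})"]) (simp only: E path_restrict[OF tt])
qed

lemma pd_G: "t \<ge> 1 \<Longrightarrow> pd (t + n) {\<omega>\<in>space M. \<forall>\<tau>. t \<le> \<tau> \<and> \<tau> < t + n \<longrightarrow> \<sigma> \<tau> \<omega> = s \<tau>}"
  unfolding pd_def
proof -
  assume t: "t \<ge> 1"
  have "(\<forall>\<tau>. t \<le> \<tau> \<and> \<tau> < t + n \<longrightarrow> \<sigma> \<tau> \<omega> = s \<tau>) \<longleftrightarrow> (\<forall>\<tau>. t \<le> \<tau> \<and> \<tau> < t + n \<longrightarrow> path (t + n) \<omega> \<tau> = s \<tau>)" for \<omega>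
    using t unfolding path_def by auto
  thus "\<exists>P. {\<omega>\<in>space M. \<forall>\<tau>. t \<le> \<tau> \<and> \<tau> < t + n \<longrightarrow> \<sigma> \<tau> \<omega> = s \<tau>} = {\<omega> \<in> space M. P (path (t + n) \<omega>)}"
    by (intro exI[of _ "\<lambda>w. \<forall>\<tau>. t \<le> \<tau> \<and> \<tau> < t + n \<longrightarrow> w \<tau> = s \<tau>"]) simp
qed

lemma step_bound:
  assumes t: "t \<ge> 1" and s: "s \<in> I t" and E: "pd t E"
  shows "\<alpha> * measure M E \<le> measure M (E \<inter> {\<omega>\<in>space M. \<sigma> t \<omega> = s})"
proof -
  obtain P where E1: "E = (\<Union>v\<in>{v\<in>R t. P v}. {\<omega>\<in>space M. path t \<omega> = v})"
    using pd_union[OF E] by blast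
  let ?B = "{v\<in>R t. P v}"
  let ?S = "{\<omega>\<in>space M. \<sigma> t \<omega> = s}"
  have ss: "?S \<in> sets M" using sig_sets[OF t] .
  have mE: "measure M E = (\<Sum>v\<in>?B. measure M {\<omega>\<in>space M. path t \<omega> = v})"
    unfolding E1 by (rule decomp) (use atom_sets in auto)
  have E2: "E \<inter> ?S = (\<Union>v\<in>?B. {\<omega>\<in>space M. path t \<omega> = v} \<inter> ?S)" unfolding E1 by blast
  have mES: "measure M (E \<inter> ?S) = (\<Sum>v\<in>?B. measure M ({\<omega>\<in>space M. path t \<omega> = v} \<inter> ?S))"
    unfolding E2 by (rule decomp) (use atom_sets ss in auto)
  have termb: "\<alpha> * measure M {\<omega>\<in>space M. path t \<omega> = v} \<le> measure M ({\<omega>\<in>space M. path t \<omega> = v} \<inter> ?S)"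
    if v: "v \<in> R t" for v
  proof (cases "measure M {\<omega>\<in>space M. path t \<omega> = v} = 0")
    case True thus ?thesis by simp
  next
    case False
    have at: "{\<omega>\<in>space M. path t \<omega> = v} = past_event M \<sigma> t v" using atom_eq[OF v] .
    have pos: "measure M (past_event M \<sigma> t v) > 0" using False at
      by (metis measure_nonneg order_le_less)
    have vr: "\<forall>i\<in>{1..<t}. v i \<in> {1..N}" using v unfolding R_def by (auto simp: PiE_iff)
    have "s \<in> {s\<in>{1..N}. cond_prob M \<sigma> t s v \<noteq> 0}" using ccond[OF t vr pos] s by simp
    hence cn: "cond_prob M \<sigma> t s v \<noteq> 0" by simp
    have ca: "\<alpha> \<le> cond_prob M \<sigma> t s v" using bcond[OF t pos cn] .
    have seteq: "{\<omega>\<in>past_event M \<sigma> t v. \<sigma> t \<omega> = s} = past_event M \<sigma> t v \<inter> ?S"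
      unfolding past_event_def by auto
    have "cond_prob M \<sigma> t s v * measure M (past_event M \<sigma> t v) = measure M (past_event M \<sigma> t v \<inter> ?S)"
      unfolding cond_prob_def seteq using pos by simp
    moreover have "\<alpha> * measure M (past_event M \<sigma> t v) \<le> cond_prob M \<sigma> t s v * measure M (past_event M \<sigma> t v)"
      using ca pos by (intro mult_right_mono) auto
    ultimately show ?thesis unfolding at by simp
  qed
  have "\<alpha> * measure M E = (\<Sum>v\<in>?B. \<alpha> * measure M {\<omega>\<in>space M. path t \<omega> = v})"
    unfolding mE by (simp add: sum_distrib_left)
  also have "\<dots> \<le> (\<Sum>v\<in>?B. measure M ({\<omega>\<in>space M. path t \<omega> = v} \<inter> ?S))"
    by (rule sum_mono) (use termb in auto)
  finally show ?thesis unfolding mES .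
qed

lemma multi_bound:
  assumes t: "t \<ge> 1" and E: "pd t E" and s: "\<forall>\<tau>. t \<le> \<tau> \<and> \<tau> < t + n \<longrightarrow> s \<tau> \<in> I \<tau>"
  shows "\<alpha> ^ n * measure M E \<le> measure M {\<omega>\<in>E. \<forall>\<tau>. t \<le> \<tau> \<and> \<tau> < t + n \<longrightarrow> \<sigma> \<tau> \<omega> = s \<tau>}"
  using s
proof (induction n)
  case 0 thus ?case by simp
next
  case (Suc n)
  let ?En = "{\<omega>\<in>E. \<forall>\<tau>. t \<le> \<tau> \<and> \<tau> < t + n \<longrightarrow> \<sigma> \<tau> \<omega> = s \<tau>}"
  have Esp: "E \<subseteq> space M" using pd_sets[OF E] sets.sets_into_space by blast
  have En: "?En = E \<inter> {\<omega>\<in>space M. \<forall>\<tau>. t \<le> \<tau> \<and> \<tau> < t + n \<longrightarrow> \<sigma> \<tau> \<omega> = s \<tau>}" using Esp by blast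
  have pdEn: "pd (t + n) ?En" unfolding En
    by (rule pd_Int[OF pd_mono[OF E] pd_G[OF t]]) simp
  have IH: "\<alpha> ^ n * measure M E \<le> measure M ?En" using Suc by simp
  have st: "\<alpha> * measure M ?En \<le> measure M (?En \<inter> {\<omega>\<in>space M. \<sigma> (t + n) \<omega> = s (t + n)})"
    by (rule step_bound[OF _ _ pdEn]) (use t Suc.prems in auto)
  have eq: "?En \<inter> {\<omega>\<in>space M. \<sigma> (t + n) \<omega> = s (t + n)} = {\<omega>\<in>E. \<forall>\<tau>. t \<le> \<tau> \<and> \<tau> < t + Suc n \<longrightarrow> \<sigma> \<tau> \<omega> = s \<tau>}"
    using Esp by (auto simp: less_Suc_eq)
  have "\<alpha> ^ Suc n * measure M E = \<alpha> * (\<alpha> ^ n * measure M E)" by simp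
  also have "\<dots> \<le> \<alpha> * measure M ?En" using IH \<alpha>0 by (intro mult_left_mono) auto
  also have "\<dots> \<le> measure M {\<omega>\<in>E. \<forall>\<tau>. t \<le> \<tau> \<and> \<tau> < t + Suc n \<longrightarrow> \<sigma> \<tau> \<omega> = s \<tau>}"
    using st unfolding eq .
  finally show ?case .
qed

lemma block_bound:
  fixes G :: "nat \<Rightarrow> 'a set" and w :: "nat \<Rightarrow> nat" and \<beta> :: real
  assumes Gpd: "\<And>j. pd (w (Suc j)) (G j)"
    and Gb: "\<And>j E. pd (w j) E \<Longrightarrow> \<beta> * measure M E \<le> measure M (E \<inter> G j)"
    and wm: "\<And>j. w j \<le> w (Suc j)" and \<beta>1: "\<beta> \<le> 1"
  shows "pd (w a) E \<Longrightarrow> measure M {\<omega>\<in>E. \<forall>j. a \<le> j \<and> j < a + m \<longrightarrow> \<omega> \<notin> G j} \<le> (1 - \<beta>) ^ m * measure M E"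
proof (induction m arbitrary: a E)
  case 0
  have "{\<omega>\<in>E. \<forall>j. a \<le> j \<and> j < a + 0 \<longrightarrow> \<omega> \<notin> G j} = E" by auto
  thus ?case by simp
next
  case (Suc m)
  have Es: "E \<in> sets M" using pd_sets[OF Suc.prems] .
  have Gs: "G a \<in> sets M" using pd_sets[OF Gpd] .
  have pd1: "pd (w (Suc a)) (E - G a)" by (rule pd_Diff[OF pd_mono[OF Suc.prems wm] Gpd])
  have eq: "{\<omega>\<in>E. \<forall>j. a \<le> j \<and> j < a + Suc m \<longrightarrow> \<omega> \<notin> G j} = {\<omega>\<in>E - G a. \<forall>j. Suc a \<le> j \<and> j < Suc a + m \<longrightarrow> \<omega> \<notin> G j}"
    by (auto, metis le_antisym not_less_eq_eq)
  have IH: "measure M {\<omega>\<in>E - G a. \<forall>j. Suc a \<le> j \<and> j < Suc a + m \<longrightarrow> \<omega> \<notin> G j} \<le> (1 - \<beta>) ^ m * measure M (E - G a)"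
    using Suc.IH[OF pd1] .
  have "measure M (E - G a) = measure M E - measure M (E \<inter> G a)" using finite_measure_Diff'[OF Es Gs] .
  also have "\<dots> \<le> (1 - \<beta>) * measure M E" using Gb[OF Suc.prems] by (simp add: algebra_simps)
  finally have D: "measure M (E - G a) \<le> (1 - \<beta>) * measure M E" .
  have "(1 - \<beta>) ^ m * measure M (E - G a) \<le> (1 - \<beta>) ^ m * ((1 - \<beta>) * measure M E)"
    using D \<beta>1 by (intro mult_left_mono) auto
  thus ?case unfolding eq using IH by (simp add: mult.assoc mult.left_commute)
qed

end



lemma traj_run:
  assumes t: "t \<ge> 1" and agree: "\<forall>\<tau>. t \<le> \<tau> \<and> \<tau> < t + n \<longrightarrow> \<sigma> \<tau> \<omega> = s \<tau>"
  shows "traj N A \<sigma> x1 (t + n) \<omega> = run N A t n s (traj N A \<sigma> x1 t \<omega>)"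
  using agree
proof (induction n)
  case 0 show ?case by simp
next
  case (Suc n)
  have IH: "traj N A \<sigma> x1 (t + n) \<omega> = run N A t n s (traj N A \<sigma> x1 t \<omega>)" using Suc by simp
  have sv: "\<sigma> (t + n) \<omega> = s (t + n)" using Suc.prems by simp
  have "traj N A \<sigma> x1 (t + Suc n) \<omega> = mat_vec N (sel_mat A (\<sigma> (t + n) \<omega>)) (traj N A \<sigma> x1 (t + n) \<omega>)"
    using t by simp
  thus ?case using IH sv by (simp add: stepT_def)
qed

lemma spread_nonneg: "N \<ge> 1 \<Longrightarrow> 0 \<le> spread N y"
  using spread_bounds[of 1 N y] by (simp add: spread_def)

lemma (in detset) traj_mono:
  assumes sv: "\<forall>k\<ge>1. \<sigma> k \<omega> \<in> {1..N}" and k: "1 \<le> k"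
  shows "spread N (traj N A \<sigma> xa (k + d) \<omega>) \<le> spread N (traj N A \<sigma> xa k \<omega>)"
proof (induction d)
  case 0 show ?case by simp
next
  case (Suc d)
  have "traj N A \<sigma> xa (k + Suc d) \<omega> = stepT N A (\<sigma> (k + d) \<omega>) (traj N A \<sigma> xa (k + d) \<omega>)"
    using k by (simp add: stepT_def)
  moreover have "\<sigma> (k + d) \<omega> \<in> {1..N}" using sv k by simp
  ultimately have "spread N (traj N A \<sigma> xa (k + Suc d) \<omega>) \<le> spread N (traj N A \<sigma> xa (k + d) \<omega>)"
    using spread_step by simp
  thus ?case using Suc by linarith
qed

locale full = detset N A I q r \<rho> a + probset M N \<sigma> I \<alpha>
  for N A I q r \<rho> a and M :: "'a measure" and \<sigma> \<alpha> +
  assumes \<alpha>1: "\<alpha> \<le> 1"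
begin

lemma conv:
  assumes \<epsilon>: "\<epsilon> > 0"
  shows "(\<lambda>k. measure M {\<omega>\<in>space M. disagreement N (traj N A \<sigma> x1 k \<omega>) \<ge> \<epsilon>}) \<longlonglongrightarrow> 0"
proof -
  define L where "L = N * q"
  have L0: "L > 0" unfolding L_def using N1 qpos by simp
  define c0 where "c0 = a ^ L"
  have c0pos: "0 < c0" and c01: "c0 \<le> 1" unfolding c0_def using apos a1 by (auto intro: power_le_one)
  define gs where "gs t = (SOME s. (\<forall>\<tau>. t \<le> \<tau> \<and> \<tau> < t + L \<longrightarrow> s \<tau> \<in> I \<tau>)
     \<and> (\<forall>x. spread N (run N A t L s x) \<le> (1 - c0) * spread N x))" for t
  have gs: "(\<forall>\<tau>. t \<le> \<tau> \<and> \<tau> < t + L \<longrightarrow> gs t \<tau> \<in> I \<tau>)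
     \<and> (\<forall>x. spread N (run N A t L (gs t) x) \<le> (1 - c0) * spread N x)" if t: "t \<ge> 1" for t
    unfolding gs_def using someI_ex[OF window[OF t]] unfolding L_def c0_def .
  define w where "w j = 1 + j * L" for j
  have w1: "w j \<ge> 1" for j unfolding w_def by simp
  have wS: "w (Suc j) = w j + L" for j unfolding w_def by simp
  have wmono: "i \<le> j \<Longrightarrow> w i \<le> w j" for i j unfolding w_def by (simp add: mult_le_mono1)
  define G where "G j = {\<omega>\<in>space M. \<forall>\<tau>. w j \<le> \<tau> \<and> \<tau> < w j + L \<longrightarrow> \<sigma> \<tau> \<omega> = gs (w j) \<tau>}" for j
  define \<beta> where "\<beta> = \<alpha> ^ L"
  have \<beta>0: "0 < \<beta>" and \<beta>1: "\<beta> \<le> 1" unfolding \<beta>_def using \<alpha>0 \<alpha>1 by (auto intro: power_le_one)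
  have Gpd: "pd (w (Suc j)) (G j)" for j
    unfolding G_def wS by (rule pd_G[OF w1])
  have Gb: "\<beta> * measure M E \<le> measure M (E \<inter> G j)" if E: "pd (w j) E" for j E
  proof -
    have Esp: "E \<subseteq> space M" using pd_sets[OF E] sets.sets_into_space by blast
    have "\<beta> * measure M E \<le> measure M {\<omega>\<in>E. \<forall>\<tau>. w j \<le> \<tau> \<and> \<tau> < w j + L \<longrightarrow> \<sigma> \<tau> \<omega> = gs (w j) \<tau>}"
      unfolding \<beta>_def by (rule multi_bound[OF w1 E]) (use gs[OF w1] in blast)
    moreover have "{\<omega>\<in>E. \<forall>\<tau>. w j \<le> \<tau> \<and> \<tau> < w j + L \<longrightarrow> \<sigma> \<tau> \<omega> = gs (w j) \<tau>} = E \<inter> G j"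
      unfolding G_def using Esp by blast
    ultimately show ?thesis by simp
  qed
  define F where "F i m = {\<omega>\<in>space M. \<forall>j. i * m \<le> j \<and> j < i * m + m \<longrightarrow> \<omega> \<notin> G j}" for i m
  have Fb: "measure M (F i m) \<le> (1 - \<beta>) ^ m" for i m
  proof -
    have "measure M (F i m) \<le> (1 - \<beta>) ^ m * measure M (space M)"
      unfolding F_def
      by (rule block_bound[where w=w and G=G, OF Gpd Gb]) (use wmono pd_space \<beta>1 in auto)
    thus ?thesis by (simp add: prob_space)
  qed
  have Fs: "F i m \<in> sets M" for i m
  proof -
    have "F i m = space M - (\<Union>j\<in>{i * m..<i * m + m}. G j)" unfolding F_def by auto
    moreover have "G j \<in> sets M" for j using pd_sets[OF Gpd] .
    ultimately show ?thesis by auto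
  qed
  have sv: "\<forall>k\<ge>1. \<sigma> k \<omega> \<in> {1..N}" if "\<omega> \<in> space M" for \<omega> using vals that by blast
  have mono: "spread N (traj N A \<sigma> x1 k' \<omega>) \<le> spread N (traj N A \<sigma> x1 k \<omega>)"
    if "\<omega> \<in> space M" "1 \<le> k" "k \<le> k'" for \<omega> k k'
    using traj_mono[where \<sigma>=\<sigma> and \<omega>=\<omega> and k=k and xa=x1 and d="k' - k", OF sv[OF that(1)] that(2)] that by simp
  have contr: "spread N (traj N A \<sigma> x1 (w (Suc j)) \<omega>) \<le> (1 - c0) * spread N (traj N A \<sigma> x1 (w j) \<omega>)"
    if "\<omega> \<in> G j" for \<omega> j
  proof -
    have "traj N A \<sigma> x1 (w j + L) \<omega> = run N A (w j) L (gs (w j)) (traj N A \<sigma> x1 (w j) \<omega>)"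
      by (rule traj_run[OF w1]) (use that in \<open>simp add: G_def\<close>)
    thus ?thesis unfolding wS using gs[OF w1] by simp
  qed
  define D0 where "D0 = spread N x1"
  have D0: "0 \<le> D0" unfolding D0_def by (rule spread_nonneg[OF N1])
  have nc: "norm (1 - c0) < 1" using c0pos c01 by simp
  have "(\<lambda>K. (1 - c0) ^ K) \<longlonglongrightarrow> 0" by (rule LIMSEQ_power_zero[OF nc])
  hence "(\<lambda>K. real N * ((1 - c0) ^ K * D0)\<^sup>2) \<longlonglongrightarrow> real N * (0 * D0)\<^sup>2"
    by (intro tendsto_mult tendsto_const tendsto_power)
  hence "eventually (\<lambda>K. real N * ((1 - c0) ^ K * D0)\<^sup>2 < \<epsilon>) sequentially"
    using \<epsilon> by (intro order_tendstoD(2)) auto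
  then obtain K where K: "real N * ((1 - c0) ^ K * D0)\<^sup>2 < \<epsilon>"
    unfolding eventually_sequentially by blast
  show ?thesis
  proof (rule LIMSEQ_I)
    fix e :: real assume e: "0 < e"
    have nb: "norm (1 - \<beta>) < 1" using \<beta>0 \<beta>1 by simp
    have "(\<lambda>m. (1 - \<beta>) ^ m) \<longlonglongrightarrow> 0" by (rule LIMSEQ_power_zero[OF nb])
    hence "(\<lambda>m. real K * (1 - \<beta>) ^ m) \<longlonglongrightarrow> real K * 0"
      by (intro tendsto_mult tendsto_const)
    hence "eventually (\<lambda>m. real K * (1 - \<beta>) ^ m < e) sequentially"
      using e by (intro order_tendstoD(2)) auto
    then obtain m where m: "real K * (1 - \<beta>) ^ m < e"
      unfolding eventually_sequentially by blast
    have bad: "{\<omega>\<in>space M. disagreement N (traj N A \<sigma> x1 k \<omega>) \<ge> \<epsilon>} \<subseteq> (\<Union>i\<in>{..<K}. F i m)"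
      if k: "w (K * m) \<le> k" for k
    proof
      fix \<omega> assume om: "\<omega> \<in> {\<omega>\<in>space M. disagreement N (traj N A \<sigma> x1 k \<omega>) \<ge> \<epsilon>}"
      hence sp: "\<omega> \<in> space M" and dis: "disagreement N (traj N A \<sigma> x1 k \<omega>) \<ge> \<epsilon>" by auto
      show "\<omega> \<in> (\<Union>i\<in>{..<K}. F i m)"
      proof (rule ccontr)
        assume "\<omega> \<notin> (\<Union>i\<in>{..<K}. F i m)"
        hence succ: "\<forall>i<K. \<exists>j. i * m \<le> j \<and> j < i * m + m \<and> \<omega> \<in> G j"
          using sp unfolding F_def by auto
        have ind: "i \<le> K \<Longrightarrow> spread N (traj N A \<sigma> x1 (w (i * m)) \<omega>) \<le> (1 - c0) ^ i * D0" for i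
        proof (induction i)
          case 0
          have "traj N A \<sigma> x1 (w 0) \<omega> = x1" unfolding w_def by simp
          thus ?case unfolding D0_def by simp
        next
          case (Suc i)
          have iK: "i < K" using Suc.prems by simp
          then obtain j where j: "i * m \<le> j" "j < i * m + m" "\<omega> \<in> G j" using succ by blast
          have IH: "spread N (traj N A \<sigma> x1 (w (i * m)) \<omega>) \<le> (1 - c0) ^ i * D0" using Suc.IH iK by simp
          have "spread N (traj N A \<sigma> x1 (w (Suc i * m)) \<omega>) \<le> spread N (traj N A \<sigma> x1 (w (Suc j)) \<omega>)"
            by (rule mono[OF sp w1 wmono]) (use j in simp)
          also have "\<dots> \<le> (1 - c0) * spread N (traj N A \<sigma> x1 (w j) \<omega>)" by (rule contr[OF j(3)])
          also have "\<dots> \<le> (1 - c0) * spread N (traj N A \<sigma> x1 (w (i * m)) \<omega>)"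
            by (rule mult_left_mono[OF mono[OF sp w1 wmono]]) (use j c01 in auto)
          also have "\<dots> \<le> (1 - c0) * ((1 - c0) ^ i * D0)"
            by (rule mult_left_mono) (use IH c01 in auto)
          finally show ?case by simp
        qed
        have "spread N (traj N A \<sigma> x1 k \<omega>) \<le> spread N (traj N A \<sigma> x1 (w (K * m)) \<omega>)"
          by (rule mono[OF sp w1 k])
        also have "\<dots> \<le> (1 - c0) ^ K * D0" using ind[of K] by (simp add: mult.commute)
        finally have spk: "spread N (traj N A \<sigma> x1 k \<omega>) \<le> (1 - c0) ^ K * D0" .
        have "disagreement N (traj N A \<sigma> x1 k \<omega>) \<le> real N * (spread N (traj N A \<sigma> x1 k \<omega>))\<^sup>2"
          by (rule disagreement_le[OF N1])
        also have "\<dots> \<le> real N * ((1 - c0) ^ K * D0)\<^sup>2"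
          by (intro mult_left_mono power_mono spk spread_nonneg[OF N1]) auto
        finally show False using K dis by linarith
      qed
    qed
    show "\<exists>no. \<forall>k\<ge>no. norm (measure M {\<omega>\<in>space M. disagreement N (traj N A \<sigma> x1 k \<omega>) \<ge> \<epsilon>} - 0) < e"
    proof (intro exI allI impI)
      fix k assume k: "w (K * m) \<le> k"
      have "measure M {\<omega>\<in>space M. disagreement N (traj N A \<sigma> x1 k \<omega>) \<ge> \<epsilon>} \<le> measure M (\<Union>i\<in>{..<K}. F i m)"
        by (rule finite_measure_mono[OF bad[OF k]]) (use Fs in auto)
      also have "\<dots> \<le> (\<Sum>i\<in>{..<K}. measure M (F i m))"
        by (rule finite_measure_subadditive_finite) (use Fs in auto)
      also have "\<dots> \<le> (\<Sum>i\<in>{..<K}. (1 - \<beta>) ^ m)" by (rule sum_mono) (rule Fb)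
      also have "\<dots> = real K * (1 - \<beta>) ^ m" by simp
      finally show "norm (measure M {\<omega>\<in>space M. disagreement N (traj N A \<sigma> x1 k \<omega>) \<ge> \<epsilon>} - 0) < e"
        using m by simp
    qed
  qed
qed

end


theorem corollary3:
  fixes N :: nat and A :: "nat \<Rightarrow> nat \<Rightarrow> real" and M :: "'a measure"
    and \<sigma> :: "nat \<Rightarrow> 'a \<Rightarrow> nat" and I :: "nat \<Rightarrow> nat set"
  assumes N: "N \<ge> 1"
    and stoch: "row_stochastic N A"
    and P: "prob_space M"
    and meas: "\<And>k. k \<ge> 1 \<Longrightarrow> \<sigma> k \<in> measurable M (count_space UNIV)"
    and vals: "\<And>k \<omega>. k \<ge> 1 \<Longrightarrow> \<omega> \<in> space M \<Longrightarrow> \<sigma> k \<omega> \<in> {1..N}"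
    and a: "rooted N A"
    and b: "\<exists>\<alpha>>0. \<forall>k\<ge>1. \<forall>v s. measure M (past_event M \<sigma> k v) > 0 \<and> cond_prob M \<sigma> k s v \<noteq> 0
                 \<longrightarrow> cond_prob M \<sigma> k s v \<ge> \<alpha>"
    and c: "\<forall>k\<ge>1. \<forall>v. (\<forall>i\<in>{1..<k}. v i \<in> {1..N}) \<and> measure M (past_event M \<sigma> k v) > 0
                 \<longrightarrow> {s\<in>{1..N}. cond_prob M \<sigma> k s v \<noteq> 0} = I k"
    and d: "\<exists>q>0. \<forall>k\<ge>1. (\<Union>\<tau>\<in>{k..k+q-1}. I \<tau>) = {1..N}"
    and e: "\<exists>Chi. Chi \<noteq> {} \<and> Chi \<subseteq> roots N A \<and> induced_strongly_connected N A Chi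
                 \<and> (\<forall>k\<ge>1. Chi \<subseteq> I k)"
  shows "\<forall>\<epsilon>>0. \<forall>x1 :: nat \<Rightarrow> real.
           (\<lambda>k. measure M {\<omega>\<in>space M. disagreement N (traj N A \<sigma> x1 k \<omega>) \<ge> \<epsilon>})
             \<longlonglongrightarrow> 0"
proof (intro allI impI)
  fix \<epsilon> :: real and x1 :: "nat \<Rightarrow> real"
  assume \<epsilon>: "\<epsilon> > 0"
  obtain \<alpha> where \<alpha>0: "\<alpha> > 0" and b\<alpha>: "\<forall>k\<ge>1. \<forall>v s. measure M (past_event M \<sigma> k v) > 0 \<and> cond_prob M \<sigma> k s v \<noteq> 0
                 \<longrightarrow> cond_prob M \<sigma> k s v \<ge> \<alpha>" using b by blast
  obtain q where q0: "q > 0" and dq: "\<forall>k\<ge>1. (\<Union>\<tau>\<in>{k..k+q-1}. I \<tau>) = {1..N}" using d by blast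
  obtain Chi where Chi: "Chi \<noteq> {}" "Chi \<subseteq> roots N A" "\<forall>k\<ge>1. Chi \<subseteq> I k" using e by blast
  obtain r where rC: "r \<in> Chi" using Chi(1) by blast
  have rR: "r \<in> roots N A" using rC Chi(2) by blast
  have rV: "r \<in> {1..N}" and rreach: "\<forall>v\<in>{1..N}. (gedge N A)\<^sup>*\<^sup>* r v"
    using rR unfolding roots_def by auto
  have rI: "\<And>k. k \<ge> 1 \<Longrightarrow> r \<in> I k" using rC Chi(3) by blast
  have nonneg: "\<And>i j. i \<in> {1..N} \<Longrightarrow> j \<in> {1..N} \<Longrightarrow> A i j \<ge> 0"
    using stoch unfolding row_stochastic_def by blast
  have rows: "\<And>i. i \<in> {1..N} \<Longrightarrow> (\<Sum>j\<in>{1..N}. A i j) = 1"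
    using stoch unfolding row_stochastic_def by blast
  obtain \<rho> where \<rho>V: "\<rho> \<in> {1..N}" and Ar\<rho>: "A r \<rho> > 0"
  proof -
    have "(\<Sum>j\<in>{1..N}. A r j) \<noteq> 0" using rows[OF rV] by simp
    then obtain j where j: "j \<in> {1..N}" "A r j \<noteq> 0" by (meson sum.neutral)
    hence "A r j > 0" using nonneg[OF rV j(1)] by simp
    thus ?thesis using that j(1) by blast
  qed
  have \<rho>reach: "(gedge N A)\<^sup>*\<^sup>* \<rho> v" if v: "v \<in> {1..N}" for v
  proof -
    have "gedge N A \<rho> r" unfolding gedge_def using \<rho>V rV Ar\<rho> by simp
    moreover have "(gedge N A)\<^sup>*\<^sup>* r v" using rreach v by blast
    ultimately show ?thesis by (rule converse_rtranclp_into_rtranclp)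
  qed
  define Pos where "Pos = (\<lambda>p. A (fst p) (snd p)) ` {p \<in> {1..N} \<times> {1..N}. A (fst p) (snd p) > 0}"
  define a where "a = Min (insert 1 Pos)"
  have finP: "finite (insert 1 Pos)" unfolding Pos_def by simp
  have apos: "a > 0" unfolding a_def using finP
    by (subst Min_gr_iff) (auto simp: Pos_def)
  have a1: "a \<le> 1" unfolding a_def using finP by (intro Min_le) auto
  have amin: "a \<le> A i j" if "i \<in> {1..N}" "j \<in> {1..N}" "A i j > 0" for i j
  proof -
    have "A i j \<in> Pos" unfolding Pos_def using that by (intro image_eqI[of _ _ "(i, j)"]) auto
    thus ?thesis unfolding a_def using finP by (intro Min_le) auto
  qed
  have D: "detset N A I q r \<rho> a"
  proof (rule detset.intro)
    show "\<And>k. 1 \<le> k \<Longrightarrow> (\<Union>\<tau>\<in>{k..k+q-1}. I \<tau>) = {1..N}" using dq by blast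
  qed (fact N nonneg rows q0 rV rI \<rho>V Ar\<rho> \<rho>reach apos a1 amin)+
  have Pr: "probset M N \<sigma> I (min \<alpha> 1)"
  proof (rule probset.intro[OF P], rule probset_axioms.intro)
    show "0 < min \<alpha> 1" using \<alpha>0 by simp
    show "min \<alpha> 1 \<le> cond_prob M \<sigma> k s v"
      if "1 \<le> k" "0 < measure M (past_event M \<sigma> k v)" "cond_prob M \<sigma> k s v \<noteq> 0" for k v s
      using b\<alpha> that by force
    show "{s \<in> {1..N}. cond_prob M \<sigma> k s v \<noteq> 0} = I k"
      if "1 \<le> k" "\<forall>i\<in>{1..<k}. v i \<in> {1..N}" "0 < measure M (past_event M \<sigma> k v)" for k v
      using c that by blast
  qed (fact meas vals)+
  have F: "full N A I q r \<rho> a M \<sigma> (min \<alpha> 1)"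
    by (rule full.intro[OF D Pr], rule full_axioms.intro) simp
  show "(\<lambda>k. measure M {\<omega>\<in>space M. disagreement N (traj N A \<sigma> x1 k \<omega>) \<ge> \<epsilon>}) \<longlonglongrightarrow> 0"
    by (rule full.conv[OF F \<epsilon>])
qed

end
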